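(* Let $M,N\ge 1$ be integers and let $\mathcal{X}=\{\mathrm{x}_1,\dots,\mathrm{x}_M\}$ and $\mathcal{Y}=\{\mathrm{y}_1,\dots,\mathrm{y}_N\}$ be two disjoint finite sets of points. Let $d_{\mathcal{X}}:\mathcal{X}\times\mathcal{X}\to\mathbb{R}^+$ and $d_{\mathcal{Y}}:\mathcal{Y}\times\mathcal{Y}\to\mathbb{R}^+$ be symmetric non-negative distance functions. Let $\mathrm{o}_{\mathcal{X}},\mathrm{o}_{\mathcal{Y}}$ be points (origins) and let $u_{\mathcal{X}}:\mathcal{X}\times\{\mathrm{o}_{\mathcal{X}}\}\to\mathbb{R}^+$ and $u_{\mathcal{Y}}:\mathcal{Y}\times\{\mathrm{o}_{\mathcal{Y}}\}\to\mathbb{R}^+$ be non-negative functions (distances to origin). Assume that each of the sets of values of $d_{\mathcal{X}}$, $d_{\mathcal{Y}}$, $u_{\mathcal{X}}$, $u_{\mathcal{Y}}$ contains at least one non-zero value. Let $f:\mathcal{X}\times\mathcal{Y}\to\mathbb{R}^+$ be a non-negative function which is not identically $0$, and write $p(\mathrm{x},\mathrm{y})=p(\mathrm{y},\mathrm{x})=f(\mathrm{x},\mathrm{y})$ for $\mathrm{x}\in\mathcal{X},\mathrm{y}\in\mathcal{Y}$. Let $\mathrm{o}\notin\mathcal{X}\cup\mathcal{Y}$ be a further (theoretical origin) point and $\mathcal{W}=\mathcal{X}\cup\mathcal{Y}\cup\{\mathrm{o}\}$, which has $S=M+N+1$ elements. Then there exists $\varepsilon>0$ such that the symmetric function $f^{\varepsilon}:\mathcal{W}\times\mathcal{W}\to\mathbb{R}^+$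 defined by $$f^{\varepsilon}(\mathrm{w},\mathrm{w}')=\begin{cases}0 & \text{if } \mathrm{w}=\mathrm{w}',\\ \big(u_{\mathcal{A}}(\mathrm{w},\mathrm{o}_{\mathcal{A}})^2+\varepsilon\big)^{1/2} & \text{if } \mathrm{w}\in\mathcal{A},\ \mathrm{w}'=\mathrm{o}\ \text{(or vice versa)},\ \mathcal{A}\in\{\mathcal{X},\mathcal{Y}\},\\ \big(d_{\mathcal{A}}(\mathrm{w},\mathrm{w}')^2+\varepsilon\big)^{1/2} & \text{if } \mathrm{w}\neq\mathrm{w}',\ \mathrm{w},\mathrm{w}'\in\mathcal{A},\ \mathcal{A}\in\{\mathcal{X},\mathcal{Y}\},\\ \big(p(\mathrm{w},\mathrm{w}')^2+\varepsilon\big)^{1/2} & \text{if } \mathrm{w}\in\mathcal{X},\mathrm{w}'\in\mathcal{Y} \text{ or vice versa},\end{cases}$$ has the property that $\mathcal{W}$ can be embedded into the Euclidean space $\mathbb{R}^{Q}$, $Q=M+N+2$, with respect to $f^{\varepsilon}$; that is, there is a map $\phi:\mathcal{W}\to\mathbb{R}^{Q}$ which is a bijection onto its image such that $\|\phi(\mathrm{w})-\phi(\mathrm{w}')\|_{\mathbb{R}^Q}=f^{\varepsilon}(\mathrm{w},\mathrm{w}')$ for all $\mathrm{w},\mathrm{w}'\in\mathcal{W}$.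
   Context: $\mathbb{R}^+$ denotes the non-negative reals and $\|\cdot\|_{\mathbb{R}^Q}$ the Euclidean norm. A set $\mathcal{V}$ equipped with a symmetric non-negative function $h$ on $\mathcal{V}\times\mathcal{V}$ is said to be embeddable into $\mathbb{R}^Q$ with respect to $h$ if there is a bijection $\phi$ from $\mathcal{V}$ onto a subset of $\mathbb{R}^Q$ with $\|\phi(\mathrm{v})-\phi(\mathrm{v}')\|=h(\mathrm{v},\mathrm{v}')$ for all $\mathrm{v},\mathrm{v}'\in\mathcal{V}$. *)

theory Defs
  imports "HOL-Analysis.Analysis"
begin

definition embeds_wrt :: "'a set \<Rightarrow> ('a \<Rightarrow> 'a \<Rightarrow> real) \<Rightarrow> ('a \<Rightarrow> 'b::real_normed_vector) \<Rightarrow> bool" where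
  "embeds_wrt V h phi \<longleftrightarrow> inj_on phi V \<and>
     (\<forall>v\<in>V. \<forall>v'\<in>V. norm (phi v - phi v') = h v v')"

definition f_eps ::
  "'a set \<Rightarrow> 'a set \<Rightarrow> 'a \<Rightarrow> ('a \<Rightarrow> 'a \<Rightarrow> real) \<Rightarrow> ('a \<Rightarrow> 'a \<Rightarrow> real)
   \<Rightarrow> ('a \<Rightarrow> 'b \<Rightarrow> real) \<Rightarrow> 'b \<Rightarrow> ('a \<Rightarrow> 'b \<Rightarrow> real) \<Rightarrow> 'b
   \<Rightarrow> ('a \<Rightarrow> 'a \<Rightarrow> real) \<Rightarrow> real \<Rightarrow> 'a \<Rightarrow> 'a \<Rightarrow> real" where
  "f_eps X Y oW dX dY uX oX uY oY f \<epsilon> w w' =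
     (if w = w' then 0
      else if w \<in> X \<and> w' = oW then sqrt ((uX w oX)\<^sup>2 + \<epsilon>)
      else if w = oW \<and> w' \<in> X then sqrt ((uX w' oX)\<^sup>2 + \<epsilon>)
      else if w \<in> Y \<and> w' = oW then sqrt ((uY w oY)\<^sup>2 + \<epsilon>)
      else if w = oW \<and> w' \<in> Y then sqrt ((uY w' oY)\<^sup>2 + \<epsilon>)
      else if w \<in> X \<and> w' \<in> X then sqrt ((dX w w')\<^sup>2 + \<epsilon>)
      else if w \<in> Y \<and> w' \<in> Y then sqrt ((dY w w')\<^sup>2 + \<epsilon>)
      else if w \<in> X \<and> w' \<in> Y then sqrt ((f w w')\<^sup>2 + \<epsilon>)
      else if w \<in> Y \<and> w' \<in> X then sqrt ((f w' w)\<^sup>2 + \<epsilon>)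
      else 0)"

end

theory Submission
  imports Defs
begin


lemma qf_insert:
  fixes g :: "'i \<Rightarrow> 'i \<Rightarrow> real"
  assumes "finite F" "a \<notin> F" "\<forall>i\<in>insert a F. \<forall>j\<in>insert a F. g i j = g j i"
  shows "(\<Sum>i\<in>insert a F. \<Sum>j\<in>insert a F. c i * c j * g i j)
     = c a * c a * g a a + 2 * c a * (\<Sum>j\<in>F. c j * g a j) + (\<Sum>i\<in>F. \<Sum>j\<in>F. c i * c j * g i j)"
proof -
  have s0: "(\<Sum>i\<in>F. c i * c a * g i a) = (\<Sum>j\<in>F. c a * (c j * g a j))"
  proof (rule sum.cong)
    fix x assume "x \<in> F"
    then have "g x a = g a x" using assms(3) by blast
    then show "c x * c a * g x a = c a * (c x * g a x)" by simp
  qed simp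
  have s: "(\<Sum>i\<in>F. c i * c a * g i a) = c a * (\<Sum>j\<in>F. c j * g a j)"
    unfolding s0 by (rule sum_distrib_left[symmetric])
  have "(\<Sum>i\<in>insert a F. \<Sum>j\<in>insert a F. c i * c j * g i j)
     = (c a * c a * g a a + (\<Sum>j\<in>F. c a * c j * g a j)) + (\<Sum>i\<in>F. c i * c a * g i a + (\<Sum>j\<in>F. c i * c j * g i j))"
    using assms(1,2) by simp
  also have "\<dots> = c a * c a * g a a + (\<Sum>j\<in>F. c a * c j * g a j) + (\<Sum>i\<in>F. c i * c a * g i a) + (\<Sum>i\<in>F. \<Sum>j\<in>F. c i * c j * g i j)"
    by (simp add: sum.distrib)
  also have "(\<Sum>j\<in>F. c a * c j * g a j) = c a * (\<Sum>j\<in>F. c j * g a j)"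
    by (simp add: sum_distrib_left mult.assoc)
  finally show ?thesis using s by simp
qed

lemma gram_embed:
  fixes g :: "'i \<Rightarrow> 'i \<Rightarrow> real" and e :: "'i \<Rightarrow> 'n::finite"
  assumes "finite I" "inj_on e I"
   "\<forall>i\<in>I. \<forall>j\<in>I. g i j = g j i"
   "\<forall>c. (\<Sum>i\<in>I. \<Sum>j\<in>I. c i * c j * g i j) \<ge> 0"
  shows "\<exists>v :: 'i \<Rightarrow> real^'n. (\<forall>i\<in>I. \<forall>j\<in>I. inner (v i) (v j) = g i j)
            \<and> (\<forall>i\<in>I. \<forall>k. k \<notin> e ` I \<longrightarrow> v i $ k = 0)"
  using assms
proof (induction I arbitrary: g rule: finite_induct)
  case empty
  then show ?case by auto
next
  case (insert a F)
  note fin = insert.hyps(1) and aF = insert.hyps(2) and inj = insert.prems(1) and sym = insert.prems(2) and psd = insert.prems(3)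
  define g' where "g' i j = g i j - g i a * g a j / g a a" for i j
  have qf: "\<And>c. (\<Sum>i\<in>insert a F. \<Sum>j\<in>insert a F. c i * c j * g i j)
     = c a * c a * g a a + 2 * c a * (\<Sum>j\<in>F. c j * g a j) + (\<Sum>i\<in>F. \<Sum>j\<in>F. c i * c j * g i j)"
    by (rule qf_insert[OF fin aF sym])
  have gaa: "g a a \<ge> 0"
  proof -
    have "0 \<le> (\<Sum>i\<in>insert a F. \<Sum>j\<in>insert a F. (\<lambda>k. if k = a then 1 else 0) i * (\<lambda>k. if k = a then 1 else 0) j * g i j)"
      by (rule psd[rule_format])
    also have "\<dots> = g a a"
    proof -
      have z: "\<And>j. j \<in> F \<Longrightarrow> (j = a) = False" using aF by auto
      show ?thesis using qf[of "\<lambda>k. if k = a then 1 else 0"] by (simp add: z cong: sum.cong)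
    qed
    finally show ?thesis .
  qed
  have zero: "g a j = 0" if "g a a = 0" "j \<in> F" for j
  proof (rule ccontr)
    assume nz: "g a j \<noteq> 0"
    define t where "t = - (g j j + 1) / (2 * g a j)"
    define c where "c = (\<lambda>k. if k = a then t else if k = j then 1 else (0::real))"
    have ja: "j \<noteq> a" using that aF by auto
    have "0 \<le> (\<Sum>i\<in>insert a F. \<Sum>j\<in>insert a F. c i * c j * g i j)" by (rule psd[rule_format])
    also have "\<dots> = 2 * t * g a j + g j j"
    proof -
      have cF: "\<And>k. k \<in> F \<Longrightarrow> c k = (if k = j then 1 else 0)"
        using aF by (auto simp: c_def)
      have inner1: "(\<Sum>k\<in>F. c i * c k * g i k) = (if i = j then g j j else 0)" if iF: "i \<in> F" for i
      proof -
        have "(\<Sum>k\<in>F. c i * c k * g i k) = (\<Sum>k\<in>F. if k = j then c i * g i j else 0)"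
          by (rule sum.cong) (simp_all add: cF)
        also have "\<dots> = c i * g i j" using \<open>j \<in> F\<close> fin by simp
        also have "\<dots> = (if i = j then g j j else 0)" using cF[OF iF] by simp
        finally show ?thesis .
      qed
      have e1: "(\<Sum>k\<in>F. c k * g a k) = g a j"
      proof -
        have "(\<Sum>k\<in>F. c k * g a k) = (\<Sum>k\<in>F. if k = j then g a j else 0)"
          by (rule sum.cong) (simp_all add: cF)
        also have "\<dots> = g a j" using that(2) fin by simp
        finally show ?thesis .
      qed
      have e2: "(\<Sum>i\<in>F. \<Sum>k\<in>F. c i * c k * g i k) = g j j"
      proof -
        have "(\<Sum>i\<in>F. \<Sum>k\<in>F. c i * c k * g i k) = (\<Sum>i\<in>F. if i = j then g j j else 0)"
          by (rule sum.cong) (simp_all add: inner1)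
        also have "\<dots> = g j j" using that(2) fin by simp
        finally show ?thesis .
      qed
      show ?thesis using qf[of c] e1 e2 that by (simp add: c_def)
    qed
    also have "\<dots> = -1" using nz by (simp add: t_def field_simps)
    finally show False by simp
  qed
  have sym': "\<forall>i\<in>F. \<forall>j\<in>F. g' i j = g' j i"
  proof (intro ballI)
    fix i j assume ij: "i \<in> F" "j \<in> F"
    have "g i j = g j i" "g i a = g a i" "g a j = g j a" using sym ij by blast+
    then show "g' i j = g' j i" unfolding g'_def by simp
  qed
  have psd': "\<forall>c. (\<Sum>i\<in>F. \<Sum>j\<in>F. c i * c j * g' i j) \<ge> 0"
  proof
    fix c :: "'i \<Rightarrow> real"
    define B where "B = (\<Sum>j\<in>F. c j * g a j)"
    define c' where "c' = c(a := - B / g a a)"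
    have cF: "\<And>i. i \<in> F \<Longrightarrow> c' i = c i" using aF by (auto simp: c'_def)
    have "(\<Sum>i\<in>F. \<Sum>j\<in>F. c i * c j * g' i j)
        = (\<Sum>i\<in>F. \<Sum>j\<in>F. c i * c j * g i j) - (\<Sum>i\<in>F. \<Sum>j\<in>F. (c i * g i a) * (c j * g a j) / g a a)"
    proof -
      have "\<And>i j. c i * c j * g' i j = c i * c j * g i j - (c i * g i a) * (c j * g a j) / g a a"
        by (simp add: g'_def algebra_simps)
      then show ?thesis by (simp add: sum_subtractf)
    qed
    also have "(\<Sum>i\<in>F. \<Sum>j\<in>F. (c i * g i a) * (c j * g a j) / g a a) = B * B / g a a"
    proof -
      have "(\<Sum>i\<in>F. \<Sum>j\<in>F. (c i * g i a) * (c j * g a j) / g a a)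
          = (\<Sum>i\<in>F. c i * g i a) * B / g a a"
      proof -
        have "\<And>i. (\<Sum>j\<in>F. (c i * g i a) * (c j * g a j) / g a a) = (c i * g i a) * B / g a a"
          by (simp add: B_def sum_distrib_left sum_divide_distrib)
        then have "(\<Sum>i\<in>F. \<Sum>j\<in>F. (c i * g i a) * (c j * g a j) / g a a) = (\<Sum>i\<in>F. (c i * g i a) * B / g a a)"
          by simp
        also have "\<dots> = (\<Sum>i\<in>F. c i * g i a) * B / g a a"
          by (simp add: sum_distrib_right sum_divide_distrib)
        finally show ?thesis .
      qed
      also have "(\<Sum>i\<in>F. c i * g i a) = B" unfolding B_def
      proof (rule sum.cong)
        fix x assume "x \<in> F"
        then have "g x a = g a x" using sym by blast
        then show "c x * g x a = c x * g a x" by simp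
      qed simp
      finally show ?thesis .
    qed
    also have "(\<Sum>i\<in>F. \<Sum>j\<in>F. c i * c j * g i j) - B * B / g a a
        = (\<Sum>i\<in>insert a F. \<Sum>j\<in>insert a F. c' i * c' j * g i j)"
    proof -
      have "(\<Sum>i\<in>insert a F. \<Sum>j\<in>insert a F. c' i * c' j * g i j)
          = c' a * c' a * g a a + 2 * c' a * B + (\<Sum>i\<in>F. \<Sum>j\<in>F. c i * c j * g i j)"
        using qf[of c'] cF by (simp add: B_def)
      moreover have "c' a * c' a * g a a + 2 * c' a * B = - (B * B / g a a)"
        by (cases "g a a = 0") (auto simp: c'_def field_simps)
      ultimately show ?thesis by simp
    qed
    also have "\<dots> \<ge> 0" by (rule psd[rule_format])
    finally show "(\<Sum>i\<in>F. \<Sum>j\<in>F. c i * c j * g' i j) \<ge> 0" .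
  qed
  have injF: "inj_on e F" using inj by auto
  obtain w :: "'i \<Rightarrow> real^'n" where
    w1: "\<forall>i\<in>F. \<forall>j\<in>F. inner (w i) (w j) = g' i j" and
    w2: "\<forall>i\<in>F. \<forall>k. k \<notin> e ` F \<longrightarrow> w i $ k = 0"
    using insert.IH[OF injF sym' psd'] by blast
  define k where "k = e a"
  have kF: "k \<notin> e ` F" using inj aF by (auto simp: k_def)
  have wk: "\<And>i. i \<in> F \<Longrightarrow> w i $ k = 0" using w2 kF by blast
  define s where "s = sqrt (g a a)"
  have ss: "s * s = g a a" using gaa by (simp add: s_def)
  define v where "v = (\<lambda>i. if i = a then s *\<^sub>R axis k 1 else w i + (g a i / s) *\<^sub>R axis k (1::real))"
  have inner_ax: "inner (axis k (1::real)) (axis k 1) = 1" by (simp add: inner_axis_axis)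
  show ?case
  proof (intro exI[of _ v] conjI ballI allI impI)
    fix i j assume i: "i \<in> insert a F" and j: "j \<in> insert a F"
    show "inner (v i) (v j) = g i j"
    proof (cases "i = a")
      case True
      show ?thesis
      proof (cases "j = a")
        case True
        then show ?thesis using \<open>i = a\<close> ss by (simp add: v_def inner_axis_axis)
      next
        case False
        then have jF: "j \<in> F" using j by auto
        have "inner (v i) (v j) = s * (g a j / s)"
          using True False wk[OF jF] by (simp add: v_def inner_add_right inner_axis' inner_axis_axis)
        also have "\<dots> = g a j" using zero[OF _ jF] ss by (cases "s = 0") auto
        finally show ?thesis using True by simp
      qed
    next
      case False
      then have iF: "i \<in> F" using i by auto
      show ?thesis
      proof (cases "j = a")
        case True
        have "inner (v i) (v j) = s * (g a i / s)"
          using True False wk[OF iF] by (simp add: v_def inner_add_left inner_axis inner_axis_axis)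
        also have "\<dots> = g a i" using zero[OF _ iF] ss by (cases "s = 0") auto
        moreover have "g a i = g i a" using sym iF by blast
        ultimately show ?thesis using True by simp
      next
        case jnA: False
        then have jF: "j \<in> F" using j by auto
        have "inner (v i) (v j) = g' i j + (g a i / s) * (g a j / s)"
          using False jnA wk[OF iF] wk[OF jF] w1 iF jF
          by (simp add: v_def inner_add_left inner_add_right inner_axis inner_axis' inner_axis_axis)
        also have "(g a i / s) * (g a j / s) = g i a * g a j / g a a"
        proof -
          have "g a i = g i a" using sym iF by blast
          then show ?thesis by (simp add: ss[symmetric])
        qed
        finally show ?thesis by (simp add: g'_def)
      qed
    qed
  next
    fix i k' assume i: "i \<in> insert a F" and k': "k' \<notin> e ` insert a F"
    have "k' \<noteq> k" using k' by (auto simp: k_def)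
    moreover have "k' \<notin> e ` F" using k' by auto
    ultimately show "v i $ k' = 0" using i w2 by (auto simp: v_def axis_def)
  qed
qed




lemma feps_sym:
  assumes "w \<in> X \<union> Y \<union> {oW}" "w' \<in> X \<union> Y \<union> {oW}" "X \<inter> Y = {}" "oW \<notin> X \<union> Y"
    "\<forall>x\<in>X. \<forall>x'\<in>X. dX x x' = dX x' x" "\<forall>y\<in>Y. \<forall>y'\<in>Y. dY y y' = dY y' y"
  shows "f_eps X Y oW dX dY uX oX uY oY f \<epsilon> w w' = f_eps X Y oW dX dY uX oX uY oY f \<epsilon> w' w"
proof -
  have a: "w \<in> X \<Longrightarrow> w' \<in> X \<Longrightarrow> dX w w' = dX w' w" using assms(5) by blast
  have b: "w \<in> Y \<Longrightarrow> w' \<in> Y \<Longrightarrow> dY w w' = dY w' w" using assms(6) by blast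
  show ?thesis
  proof (cases "w = w'")
    case True
    then show ?thesis by simp
  next
    case neq: False
    have w: "w = oW \<or> (w \<in> X \<and> w \<notin> Y \<and> w \<noteq> oW) \<or> (w \<in> Y \<and> w \<notin> X \<and> w \<noteq> oW)"
      using assms(1,3,4) by blast
    have w': "w' = oW \<or> (w' \<in> X \<and> w' \<notin> Y \<and> w' \<noteq> oW) \<or> (w' \<in> Y \<and> w' \<notin> X \<and> w' \<noteq> oW)"
      using assms(2,3,4) by blast
    from w show ?thesis
    proof (elim disjE conjE)
      assume "w = oW"
      then show ?thesis using w' neq by (elim disjE conjE) (simp_all add: f_eps_def)
    next
      assume h: "w \<in> X" "w \<notin> Y" "w \<noteq> oW"
      from w' show ?thesis
      proof (elim disjE conjE)
        assume "w' = oW" then show ?thesis using h by (simp add: f_eps_def)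
      next
        assume h': "w' \<in> X" "w' \<notin> Y" "w' \<noteq> oW"
        have "dX w w' = dX w' w" using a h h' by blast
        then show ?thesis using h h' neq by (simp add: f_eps_def)
      next
        assume h': "w' \<in> Y" "w' \<notin> X" "w' \<noteq> oW"
        then show ?thesis using h neq by (simp add: f_eps_def)
      qed
    next
      assume h: "w \<in> Y" "w \<notin> X" "w \<noteq> oW"
      from w' show ?thesis
      proof (elim disjE conjE)
        assume "w' = oW" then show ?thesis using h by (simp add: f_eps_def)
      next
        assume h': "w' \<in> X" "w' \<notin> Y" "w' \<noteq> oW"
        then show ?thesis using h neq by (simp add: f_eps_def)
      next
        assume h': "w' \<in> Y" "w' \<notin> X" "w' \<noteq> oW"
        have "dY w w' = dY w' w" using b h h' by blast
        then show ?thesis using h h' neq by (simp add: f_eps_def)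
      qed
    qed
  qed
qed

lemma feps_sq:
  assumes "w \<in> X \<union> Y \<union> {oW}" "w' \<in> X \<union> Y \<union> {oW}" "X \<inter> Y = {}" "oW \<notin> X \<union> Y" "\<epsilon> \<ge> 0"
  shows "(f_eps X Y oW dX dY uX oX uY oY f \<epsilon> w w')\<^sup>2
       = (f_eps X Y oW dX dY uX oX uY oY f 0 w w')\<^sup>2 + (if w = w' then 0 else \<epsilon>)"
  using assms unfolding f_eps_def by auto

lemma feps_nonneg: "\<epsilon> \<ge> 0 \<Longrightarrow> f_eps X Y oW dX dY uX oX uY oY f \<epsilon> w w' \<ge> 0"
  unfolding f_eps_def by auto

lemma feps_pos:
  assumes "w \<in> X \<union> Y \<union> {oW}" "w' \<in> X \<union> Y \<union> {oW}" "X \<inter> Y = {}" "oW \<notin> X \<union> Y" "\<epsilon> > 0" "w \<noteq> w'"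
  shows "f_eps X Y oW dX dY uX oX uY oY f \<epsilon> w w' > 0"
  using assms unfolding f_eps_def by (auto intro!: add_nonneg_pos)



lemma psd_shift:
  fixes a :: "'i \<Rightarrow> 'i \<Rightarrow> real" and c :: "'i \<Rightarrow> real"
  assumes fin: "finite I" and eps: "\<epsilon> = 2 * (\<Sum>i\<in>I. \<Sum>j\<in>I. \<bar>a i j\<bar>) + 2"
  shows "0 \<le> (\<Sum>i\<in>I. \<Sum>j\<in>I. c i * c j * (a i j + \<epsilon>/2 + (if i = j then \<epsilon>/2 else 0)))"
proof -
  define S where "S = (\<Sum>i\<in>I. (c i)\<^sup>2)"
  define K where "K = (\<Sum>i\<in>I. \<Sum>j\<in>I. \<bar>a i j\<bar>)"
  have S0: "S \<ge> 0" unfolding S_def by (rule sum_nonneg) simp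
  have K0: "K \<ge> 0" unfolding K_def by (intro sum_nonneg) simp
  have cS: "(c i)\<^sup>2 \<le> S" if "i \<in> I" for i
    unfolding S_def by (rule member_le_sum[OF that]) (simp_all add: fin)
  have t1: "c i * c j * a i j \<ge> - (\<bar>a i j\<bar> * S)" if "i \<in> I" "j \<in> I" for i j
  proof -
    have "\<bar>c i * c j\<bar> \<le> ((c i)\<^sup>2 + (c j)\<^sup>2) / 2"
    proof -
      have "0 \<le> (\<bar>c i\<bar> - \<bar>c j\<bar>)\<^sup>2" by simp
      then show ?thesis by (simp add: abs_mult power2_eq_square algebra_simps)
    qed
    also have "\<dots> \<le> S" using cS[OF that(1)] cS[OF that(2)] by simp
    finally have h: "\<bar>c i * c j\<bar> \<le> S" .
    have "\<bar>c i * c j * a i j\<bar> = \<bar>c i * c j\<bar> * \<bar>a i j\<bar>" by (simp add: abs_mult)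
    also have "\<dots> \<le> S * \<bar>a i j\<bar>" by (rule mult_right_mono[OF h]) simp
    finally show ?thesis by (simp add: mult.commute)
  qed
  have sum1: "(\<Sum>i\<in>I. \<Sum>j\<in>I. c i * c j * a i j) \<ge> - (K * S)"
  proof -
    have "(\<Sum>i\<in>I. \<Sum>j\<in>I. c i * c j * a i j) \<ge> (\<Sum>i\<in>I. \<Sum>j\<in>I. - (\<bar>a i j\<bar> * S))"
      by (intro sum_mono) (simp add: t1)
    also have "(\<Sum>i\<in>I. \<Sum>j\<in>I. - (\<bar>a i j\<bar> * S)) = - (K * S)"
      by (simp add: K_def sum_negf sum_distrib_right)
    finally show ?thesis .
  qed
  have sum2: "(\<Sum>i\<in>I. \<Sum>j\<in>I. c i * c j * (\<epsilon>/2)) = (\<epsilon>/2) * ((\<Sum>i\<in>I. c i) * (\<Sum>i\<in>I. c i))"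
    by (simp add: sum_product sum_distrib_left mult.commute)
  have sum3: "(\<Sum>i\<in>I. \<Sum>j\<in>I. c i * c j * (if i = j then \<epsilon>/2 else 0)) = (\<epsilon>/2) * S"
  proof -
    have "\<And>i. i \<in> I \<Longrightarrow> (\<Sum>j\<in>I. c i * c j * (if i = j then \<epsilon>/2 else 0)) = (\<epsilon>/2) * (c i)\<^sup>2"
    proof -
      fix i assume iI: "i \<in> I"
      have "(\<Sum>j\<in>I. c i * c j * (if i = j then \<epsilon>/2 else 0)) = (\<Sum>j\<in>I. if i = j then c i * c i * (\<epsilon>/2) else 0)"
        by (rule sum.cong) auto
      also have "\<dots> = (\<epsilon>/2) * (c i)\<^sup>2" using fin iI by (simp add: power2_eq_square)
      finally show "(\<Sum>j\<in>I. c i * c j * (if i = j then \<epsilon>/2 else 0)) = (\<epsilon>/2) * (c i)\<^sup>2" .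
    qed
    then have "(\<Sum>i\<in>I. \<Sum>j\<in>I. c i * c j * (if i = j then \<epsilon>/2 else 0)) = (\<Sum>i\<in>I. (\<epsilon>/2) * (c i)\<^sup>2)"
      by (rule sum.cong[OF refl])
    also have "\<dots> = (\<epsilon>/2) * S" by (simp add: S_def sum_distrib_left)
    finally show ?thesis .
  qed
  have split: "(\<Sum>i\<in>I. \<Sum>j\<in>I. c i * c j * (a i j + \<epsilon>/2 + (if i = j then \<epsilon>/2 else 0)))
     = (\<Sum>i\<in>I. \<Sum>j\<in>I. c i * c j * a i j) + (\<Sum>i\<in>I. \<Sum>j\<in>I. c i * c j * (\<epsilon>/2))
       + (\<Sum>i\<in>I. \<Sum>j\<in>I. c i * c j * (if i = j then \<epsilon>/2 else 0))"
    by (simp add: sum.distrib distrib_left)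
  have sq: "(\<Sum>i\<in>I. c i) * (\<Sum>i\<in>I. c i) \<ge> 0" by simp
  have e2: "\<epsilon>/2 = K + 1" using eps by (simp add: K_def)
  have "- (K * S) + (\<epsilon>/2) * ((\<Sum>i\<in>I. c i) * (\<Sum>i\<in>I. c i)) + (\<epsilon>/2) * S \<ge> 0"
    using S0 K0 sq unfolding e2 by (simp add: algebra_simps)
  then show ?thesis unfolding split sum2 sum3 using sum1 by linarith
qed


theorem theorem3:
  fixes X Y :: "'a set" and oW :: 'a
    and dX dY :: "'a \<Rightarrow> 'a \<Rightarrow> real"
    and uX uY :: "'a \<Rightarrow> 'b \<Rightarrow> real" and oX oY :: 'b
    and f :: "'a \<Rightarrow> 'a \<Rightarrow> real"
  assumes finX: "finite X" and finY: "finite Y"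
    and neX: "X \<noteq> {}" and neY: "Y \<noteq> {}"
    and disj: "X \<inter> Y = {}"
    and o_notin: "oW \<notin> X \<union> Y"
    and dX_sym: "\<forall>x\<in>X. \<forall>x'\<in>X. dX x x' = dX x' x"
    and dX_nonneg: "\<forall>x\<in>X. \<forall>x'\<in>X. dX x x' \<ge> 0"
    and dY_sym: "\<forall>y\<in>Y. \<forall>y'\<in>Y. dY y y' = dY y' y"
    and dY_nonneg: "\<forall>y\<in>Y. \<forall>y'\<in>Y. dY y y' \<ge> 0"
    and uX_nonneg: "\<forall>x\<in>X. uX x oX \<ge> 0"
    and uY_nonneg: "\<forall>y\<in>Y. uY y oY \<ge> 0"
    and dX_nz: "\<exists>x\<in>X. \<exists>x'\<in>X. dX x x' \<noteq> 0"
    and dY_nz: "\<exists>y\<in>Y. \<exists>y'\<in>Y. dY y y' \<noteq> 0"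
    and uX_nz: "\<exists>x\<in>X. uX x oX \<noteq> 0"
    and uY_nz: "\<exists>y\<in>Y. uY y oY \<noteq> 0"
    and f_nonneg: "\<forall>x\<in>X. \<forall>y\<in>Y. f x y \<ge> 0"
    and f_nz: "\<exists>x\<in>X. \<exists>y\<in>Y. f x y \<noteq> 0"
    and dimQ: "CARD('n::finite) = card X + card Y + 2"
  shows "\<exists>\<epsilon>>0. \<exists>phi :: 'a \<Rightarrow> real ^ 'n.
           embeds_wrt (X \<union> Y \<union> {oW}) (f_eps X Y oW dX dY uX oX uY oY f \<epsilon>) phi"
proof -
  define F where "F = f_eps X Y oW dX dY uX oX uY oY f"
  define I where "I = X \<union> Y"
  define W where "W = X \<union> Y \<union> {oW}"
  have finI: "finite I" using finX finY by (simp add: I_def)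
  have IW: "\<And>i. i \<in> I \<Longrightarrow> i \<in> W" by (simp add: I_def W_def)
  have oWW: "oW \<in> W" by (simp add: W_def)
  have ino: "\<And>i. i \<in> I \<Longrightarrow> i \<noteq> oW" using o_notin by (auto simp: I_def)
  define a where "a i j = ((F 0 i oW)\<^sup>2 + (F 0 j oW)\<^sup>2 - (F 0 i j)\<^sup>2) / 2" for i j
  define \<epsilon> where "\<epsilon> = 2 * (\<Sum>i\<in>I. \<Sum>j\<in>I. \<bar>a i j\<bar>) + 2"
  have eps_pos: "\<epsilon> > 0"
  proof -
    have "(\<Sum>i\<in>I. \<Sum>j\<in>I. \<bar>a i j\<bar>) \<ge> 0" by (intro sum_nonneg) simp
    then show ?thesis by (simp add: \<epsilon>_def)
  qed
  define g where "g i j = ((F \<epsilon> i oW)\<^sup>2 + (F \<epsilon> j oW)\<^sup>2 - (F \<epsilon> i j)\<^sup>2) / 2" for i j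
  have Fsym: "\<And>w w'. w \<in> W \<Longrightarrow> w' \<in> W \<Longrightarrow> F \<epsilon> w w' = F \<epsilon> w' w"
    unfolding F_def W_def using disj o_notin dX_sym dY_sym by (intro feps_sym) auto
  have Fsq: "\<And>w w'. w \<in> W \<Longrightarrow> w' \<in> W \<Longrightarrow> (F \<epsilon> w w')\<^sup>2 = (F 0 w w')\<^sup>2 + (if w = w' then 0 else \<epsilon>)"
    unfolding F_def W_def using disj o_notin eps_pos by (intro feps_sq) auto
  have Fdiag: "\<And>w. F \<epsilon> w w = 0" by (simp add: F_def f_eps_def)
  have gform: "g i j = a i j + \<epsilon>/2 + (if i = j then \<epsilon>/2 else 0)" if "i \<in> I" "j \<in> I" for i j
    using Fsq[OF IW[OF that(1)] oWW] Fsq[OF IW[OF that(2)] oWW] Fsq[OF IW[OF that(1)] IW[OF that(2)]]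
      ino[OF that(1)] ino[OF that(2)]
    by (simp add: g_def a_def field_simps)
  have gsym: "\<forall>i\<in>I. \<forall>j\<in>I. g i j = g j i"
  proof (intro ballI)
    fix i j assume ij: "i \<in> I" "j \<in> I"
    have "F \<epsilon> i j = F \<epsilon> j i" by (rule Fsym[OF IW[OF ij(1)] IW[OF ij(2)]])
    then show "g i j = g j i" by (simp add: g_def)
  qed
  have gpsd: "\<forall>c. (\<Sum>i\<in>I. \<Sum>j\<in>I. c i * c j * g i j) \<ge> 0"
  proof
    fix c :: "'a \<Rightarrow> real"
    have "(\<Sum>i\<in>I. \<Sum>j\<in>I. c i * c j * g i j)
        = (\<Sum>i\<in>I. \<Sum>j\<in>I. c i * c j * (a i j + \<epsilon>/2 + (if i = j then \<epsilon>/2 else 0)))"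
      by (intro sum.cong refl) (simp add: gform)
    also have "\<dots> \<ge> 0" by (rule psd_shift[OF finI \<epsilon>_def])
    finally show "(\<Sum>i\<in>I. \<Sum>j\<in>I. c i * c j * g i j) \<ge> 0" .
  qed
  have cardI: "card I \<le> card (UNIV :: 'n set)"
    using dimQ finX finY disj by (simp add: I_def card_Un_disjoint)
  obtain e :: "'a \<Rightarrow> 'n" where e: "inj_on e I"
    using card_le_inj[OF finI _ cardI] by auto
  obtain v :: "'a \<Rightarrow> real^'n" where v: "\<forall>i\<in>I. \<forall>j\<in>I. inner (v i) (v j) = g i j"
    using gram_embed[OF finI e gsym gpsd] by blast
  define phi where "phi w = (if w = oW then 0 else v w)" for w
  have nrm: "norm (phi w - phi w') = F \<epsilon> w w'" if w: "w \<in> W" and w': "w' \<in> W" for w w'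
  proof -
    have "(norm (phi w - phi w'))\<^sup>2 = (F \<epsilon> w w')\<^sup>2"
    proof (cases "w = w'")
      case True
      then show ?thesis by (simp add: Fdiag)
    next
      case neq: False
      have WI: "\<And>x. x \<in> W \<Longrightarrow> x \<noteq> oW \<Longrightarrow> x \<in> I" by (auto simp: W_def I_def)
      show ?thesis
      proof (cases "w = oW")
        case True
        then have w'I: "w' \<in> I" using neq w' WI by auto
        have "(norm (phi w - phi w'))\<^sup>2 = inner (v w') (v w')"
          using True ino[OF w'I] by (simp add: phi_def power2_norm_eq_inner)
        also have "\<dots> = (F \<epsilon> w' oW)\<^sup>2" proof -
            have "inner (v w') (v w') = g w' w'" using v w'I by blast
            then show ?thesis by (simp add: g_def Fdiag)
          qed
        also have "\<dots> = (F \<epsilon> w w')\<^sup>2" using Fsym[OF w' oWW] True by simp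
        finally show ?thesis .
      next
        case wnO: False
        then have wI: "w \<in> I" using w WI by auto
        show ?thesis
        proof (cases "w' = oW")
          case True
          have "(norm (phi w - phi w'))\<^sup>2 = inner (v w) (v w)"
            using True wnO by (simp add: phi_def power2_norm_eq_inner)
          also have "\<dots> = (F \<epsilon> w oW)\<^sup>2" proof -
            have "inner (v w) (v w) = g w w" using v wI by blast
            then show ?thesis by (simp add: g_def Fdiag)
          qed
          finally show ?thesis using True by simp
        next
          case False
          then have w'I: "w' \<in> I" using w' WI by auto
          have "(norm (phi w - phi w'))\<^sup>2 = inner (v w) (v w) + inner (v w') (v w') - 2 * inner (v w) (v w')"
            using False wnO by (simp add: phi_def power2_norm_eq_inner inner_diff_left inner_diff_right inner_commute)
          also have "\<dots> = g w w + g w' w' - 2 * g w w'" proof -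
            have "inner (v w) (v w) = g w w" "inner (v w') (v w') = g w' w'" "inner (v w) (v w') = g w w'"
              using v wI w'I by blast+
            then show ?thesis by simp
          qed
          also have "\<dots> = (F \<epsilon> w w')\<^sup>2" by (simp add: g_def Fdiag field_simps)
          finally show ?thesis .
        qed
      qed
    qed
    moreover have "F \<epsilon> w w' \<ge> 0" unfolding F_def using eps_pos by (intro feps_nonneg) simp
    ultimately show ?thesis by simp
  qed
  have "embeds_wrt W (F \<epsilon>) phi"
    unfolding embeds_wrt_def
  proof (intro conjI ballI inj_onI)
    fix w w' assume w: "w \<in> W" and w': "w' \<in> W" and eq: "phi w = phi w'"
    show "w = w'"
    proof (rule ccontr)
      assume "w \<noteq> w'"
      then have "F \<epsilon> w w' > 0" unfolding F_def W_def
        using w w' disj o_notin eps_pos by (intro feps_pos) (auto simp: W_def)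
      then show False using nrm[OF w w'] eq by simp
    qed
  next
    fix w w' assume "w \<in> W" "w' \<in> W"
    then show "norm (phi w - phi w') = F \<epsilon> w w'" by (rule nrm)
  qed
  then show ?thesis using eps_pos unfolding F_def W_def by blast
qed
end
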